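(* Let ${\cal X}$, ${\cal V}$, ${\cal Y}$ be finite alphabets, $P_X$ a distribution on ${\cal X}$, $P_{V|X}$ a channel from ${\cal X}$ to ${\cal V}$, and $d$ a nonnegative convex function on probability distributions on ${\cal X}\times{\cal Y}$ (i.e., ${\rm E}_J[d(P_{X_JY_J})]\ge d({\rm E}_J[P_{X_JY_J}])$ for every finite random variable $J$). Let $X^L$ be i.i.d. with distribution $P_X$, let $V^L$ be obtained from $X^L$ through the memoryless channel $P_{V|X}$, and let $Y^L$ be the output of a code of block length $L$ with $2^{LR}$ code words in ${\cal Y}^L$ whose (possibly random) encoder sees only $V^L$, so that $Y^L$ is conditionally independent of $X^L$ given $V^L$. If ${\rm E}[d(P^e_{X^LY^L})]=\Delta$, then $$R\ \ge\ \min_{P_{Y|V}:\ d(P_{XY})\le\Delta} I(V;Y),$$ where for a channel $P_{Y|V}$ the joint law is $P_{XVY}=P_XP_{V|X}P_{Y|V}$, $P_{XY}$ is its $(X,Y)$-marginal, and $I(V;Y)$ is computed from its $(V,Y)$-marginal.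
   Context: For strings $x^L\in{\cal X}^L$, $y^L\in{\cal Y}^L$, the empirical distribution is $P^e_{x^Ly^L}(a,b)=\frac1L|\{\ell:(x_\ell,y_\ell)=(a,b)\}|$ for $a\in{\cal X}$, $b\in{\cal Y}$. Mutual information is $I(V;Y)=\sum_{(v,y)\in\mathrm{supp}P_{VY}}P_{VY}(v,y)\log_2\frac{P_{VY}(v,y)}{P_V(v)P_Y(y)}$. *)

theory Defs
  imports Complex_Main
begin

definition is_dist :: "('a::finite \<Rightarrow> real) \<Rightarrow> bool" where
  "is_dist P \<longleftrightarrow> (\<forall>a. P a \<ge> 0) \<and> (\<Sum>a\<in>UNIV. P a) = 1"

definition is_channel :: "('a \<Rightarrow> 'b::finite \<Rightarrow> real) \<Rightarrow> bool" where
  "is_channel W \<longleftrightarrow> (\<forall>a. is_dist (W a))"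

definition emp_dist :: "'a list \<Rightarrow> 'b list \<Rightarrow> ('a \<times> 'b \<Rightarrow> real)" where
  "emp_dist xs ys = (\<lambda>(a,b). real (card {l. l < length xs \<and> xs ! l = a \<and> ys ! l = b}) / real (length xs))"

definition mutual_info :: "('v::finite \<times> 'y::finite \<Rightarrow> real) \<Rightarrow> real" where
  "mutual_info P = (\<Sum>(v,y)\<in>{p. P p \<noteq> 0}.
      P (v,y) * log 2 (P (v,y) / ((\<Sum>y'\<in>UNIV. P (v,y')) * (\<Sum>v'\<in>UNIV. P (v',y)))))"

definition marg_XY :: "('x::finite \<Rightarrow> real) \<Rightarrow> ('x \<Rightarrow> 'v::finite \<Rightarrow> real) \<Rightarrow> ('v \<Rightarrow> 'y \<Rightarrow> real) \<Rightarrow> ('x \<times> 'y \<Rightarrow> real)" where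
  "marg_XY PX W Q = (\<lambda>(x,y). \<Sum>v\<in>UNIV. PX x * W x v * Q v y)"

definition marg_VY :: "('x::finite \<Rightarrow> real) \<Rightarrow> ('x \<Rightarrow> 'v::finite \<Rightarrow> real) \<Rightarrow> ('v \<Rightarrow> 'y \<Rightarrow> real) \<Rightarrow> ('v \<times> 'y \<Rightarrow> real)" where
  "marg_VY PX W Q = (\<lambda>(v,y). \<Sum>x\<in>UNIV. PX x * W x v * Q v y)"

text \<open>Probability of (x^L, v^L, y^L) under i.i.d. source, memoryless channel, random encoder E.\<close>
definition block_prob :: "('x \<Rightarrow> real) \<Rightarrow> ('x \<Rightarrow> 'v \<Rightarrow> real) \<Rightarrow> ('v list \<Rightarrow> 'y list \<Rightarrow> real)
    \<Rightarrow> 'x list \<Rightarrow> 'v list \<Rightarrow> 'y list \<Rightarrow> real" where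
  "block_prob PX W E xs vs ys = (\<Prod>l<length xs. PX (xs ! l) * W (xs ! l) (vs ! l)) * E vs ys"

end

theory Submission imports Defs begin

lemma finite_len: "finite {xs::'a::finite list. length xs = n}"
  using finite_lists_length_eq[OF finite_UNIV, of n] by simp

lemma sum_list_prod:
  fixes f :: "nat \<Rightarrow> 'a::finite \<Rightarrow> real"
  shows "(\<Sum>xs\<in>{xs::'a::finite list. length xs = n}. \<Prod>l<n. f l (xs!l)) = (\<Prod>l<n. \<Sum>a\<in>UNIV. f l a)"
proof (induction n arbitrary: f)
  case 0
  then show ?case by simp
next
  case (Suc n)
  have eq: "{xs::'a list. length xs = Suc n} = (\<lambda>(a,xs). a#xs) ` (UNIV \<times> {xs. length xs = n})"
    by (auto simp: image_iff length_Suc_conv)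
  have inj: "inj_on (\<lambda>(a,xs). a#xs) (UNIV \<times> {xs::'a list. length xs = n})"
    by (auto simp: inj_on_def)
  have "(\<Sum>xs\<in>{xs::'a list. length xs = Suc n}. \<Prod>l<Suc n. f l (xs!l))
      = (\<Sum>(a,xs)\<in>UNIV \<times> {xs::'a list. length xs = n}. f 0 a * (\<Prod>l<n. f (Suc l) (xs!l)))"
    apply (simp only: eq sum.reindex[OF inj] o_def)
    apply (intro sum.cong refl)
    apply (simp only: prod.lessThan_Suc_shift)
    apply (auto simp: case_prod_beta)
    done
  also have "\<dots> = (\<Sum>a\<in>UNIV. f 0 a * (\<Sum>xs\<in>{xs::'a list. length xs = n}. \<Prod>l<n. f (Suc l) (xs!l)))"
    by (simp add: sum.cartesian_product[symmetric] sum_distrib_left)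
  also have "\<dots> = (\<Sum>a\<in>UNIV. f 0 a) * (\<Prod>l<n. \<Sum>a\<in>UNIV. f (Suc l) a)"
    using Suc.IH[of "\<lambda>l. f (Suc l)"] by (simp add: sum_distrib_right)
  also have "\<dots> = (\<Prod>l<Suc n. \<Sum>a\<in>UNIV. f l a)"
    by (simp only: prod.lessThan_Suc_shift)
  finally show ?case .
qed

lemma sum_list_prod_fix:
  fixes f :: "nat \<Rightarrow> 'a::finite \<Rightarrow> real"
  assumes "l < n"
  shows "(\<Sum>xs\<in>{xs::'a list. length xs = n}. (if xs!l = a then 1 else 0) * (\<Prod>k<n. f k (xs!k)))
     = f l a * (\<Prod>k\<in>{..<n}-{l}. \<Sum>b\<in>UNIV. f k b)"
proof -
  define g where "g k b = (if k = l then (if b = a then f l b else 0) else f k b)" for k b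
  have "\<And>xs. (if xs!l = a then 1 else 0) * (\<Prod>k<n. f k (xs!k)) = (\<Prod>k<n. g k (xs!k))"
  proof -
    fix xs :: "'a list"
    have "(\<Prod>k<n. g k (xs!k)) = g l (xs!l) * (\<Prod>k\<in>{..<n}-{l}. g k (xs!k))"
      using assms by (subst prod.remove[of _ l]) auto
    also have "(\<Prod>k\<in>{..<n}-{l}. g k (xs!k)) = (\<Prod>k\<in>{..<n}-{l}. f k (xs!k))"
      by (rule prod.cong) (auto simp: g_def)
    also have "(\<Prod>k<n. f k (xs!k)) = f l (xs!l) * (\<Prod>k\<in>{..<n}-{l}. f k (xs!k))"
      using assms by (subst prod.remove[of _ l]) auto
    ultimately show "(if xs!l = a then 1 else 0) * (\<Prod>k<n. f k (xs!k)) = (\<Prod>k<n. g k (xs!k))"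
      by (simp add: g_def)
  qed
  then have "?thesis \<longleftrightarrow> (\<Prod>l<n. \<Sum>a\<in>UNIV. g l a) = f l a * (\<Prod>k\<in>{..<n}-{l}. \<Sum>b\<in>UNIV. f k b)"
    by (simp add: sum_list_prod)
  moreover have "(\<Prod>l<n. \<Sum>a\<in>UNIV. g l a) = (\<Sum>b\<in>UNIV. g l b) * (\<Prod>k\<in>{..<n}-{l}. \<Sum>b\<in>UNIV. g k b)"
    using assms by (subst prod.remove[of _ l]) auto
  moreover have "(\<Prod>k\<in>{..<n}-{l}. \<Sum>b\<in>UNIV. g k b) = (\<Prod>k\<in>{..<n}-{l}. \<Sum>b\<in>UNIV. f k b)"
    by (rule prod.cong) (auto simp: g_def)
  moreover have "(\<Sum>b\<in>UNIV. g l b) = f l a"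
    by (simp add: g_def)
  ultimately show ?thesis by simp
qed

lemma gibbs:
  fixes a b :: "'i \<Rightarrow> real"
  assumes "finite S" "\<And>i. i \<in> S \<Longrightarrow> a i > 0" "\<And>i. i \<in> S \<Longrightarrow> b i > 0" "sum a S = 1"
  shows "(\<Sum>i\<in>S. a i * ln (b i / a i)) \<le> ln (sum b S)"
proof -
  have "S \<noteq> {}" using assms(4) by auto
  then have B: "sum b S > 0" using assms by (intro sum_pos) auto
  define B where "B = sum b S"
  have "(\<Sum>i\<in>S. a i * ln (b i / a i)) - ln B = (\<Sum>i\<in>S. a i * (ln (b i / a i) - ln B))"
    using assms(4) by (simp add: sum_subtractf right_diff_distrib sum_distrib_right[symmetric])
  also have "\<dots> = (\<Sum>i\<in>S. a i * ln (b i / (a i * B)))"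
  proof (intro sum.cong refl)
    fix i assume "i \<in> S"
    then have "a i > 0" "b i > 0" using assms by auto
    then show "a i * (ln (b i / a i) - ln B) = a i * ln (b i / (a i * B))"
      using B by (simp add: B_def ln_div ln_mult)
  qed
  also have "\<dots> \<le> (\<Sum>i\<in>S. a i * (b i / (a i * B) - 1))"
    using assms B by (intro sum_mono mult_left_mono ln_le_minus_one) (auto simp: B_def less_imp_le)
  also have "\<dots> = (\<Sum>i\<in>S. b i / B - a i)"
  proof (intro sum.cong refl)
    fix i assume "i \<in> S"
    then have "a i > 0" "b i > 0" using assms by auto
    then show "a i * (b i / (a i * B) - 1) = b i / B - a i"
      using B by (simp add: B_def field_simps)
  qed
  also have "\<dots> = 0" using assms B by (simp add: sum_subtractf B_def sum_divide_distrib[symmetric])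
  finally show ?thesis by (simp add: B_def)
qed

theorem lemma3p1:
  fixes PX :: "'x::finite \<Rightarrow> real"
    and W :: "'x \<Rightarrow> 'v::finite \<Rightarrow> real"
    and d :: "('x \<times> 'y::finite \<Rightarrow> real) \<Rightarrow> real"
    and L :: nat and R :: real and \<Delta> :: real
    and C :: "'y list set"
    and E :: "'v list \<Rightarrow> 'y list \<Rightarrow> real"
  assumes PX: "is_dist PX"
    and W: "is_channel W"
    and d_nonneg: "\<And>P. is_dist P \<Longrightarrow> d P \<ge> 0"
    and d_convex: "\<And>(J::nat set) w Q. finite J \<Longrightarrow> (\<forall>j\<in>J. w j \<ge> 0) \<Longrightarrow> (\<Sum>j\<in>J. w j) = 1
        \<Longrightarrow> (\<forall>j\<in>J. is_dist (Q j))
        \<Longrightarrow> (\<Sum>j\<in>J. w j * d (Q j)) \<ge> d (\<lambda>p. \<Sum>j\<in>J. w j * Q j p)"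
    and L: "L > 0"
    and C: "C \<subseteq> {ys. length ys = L}"
    and rate: "real (card C) = 2 powr (real L * R)"
    and E_nonneg: "\<And>vs ys. E vs ys \<ge> 0"
    and E_supp: "\<And>vs ys. ys \<notin> C \<Longrightarrow> E vs ys = 0"
    and E_sum: "\<And>vs. length vs = L \<Longrightarrow> (\<Sum>ys\<in>C. E vs ys) = 1"
    and distortion: "(\<Sum>xs\<in>{xs. length xs = L}. \<Sum>vs\<in>{vs. length vs = L}. \<Sum>ys\<in>C.
                        block_prob PX W E xs vs ys * d (emp_dist xs ys)) = \<Delta>"
  shows "\<exists>Q :: 'v \<Rightarrow> 'y \<Rightarrow> real. is_channel Q \<and> d (marg_XY PX W Q) \<le> \<Delta>
            \<and> mutual_info (marg_VY PX W Q) \<le> R"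
proof -
  define XL where "XL = {xs::'x list. length xs = L}"
  define VL where "VL = {vs::'v list. length vs = L}"
  define p where "p v = (\<Sum>x\<in>UNIV. PX x * W x v)" for v
  define K where "K l vs = (\<Prod>k\<in>{..<L}-{l}. p (vs!k))" for l vs
  define PV where "PV vs = (\<Prod>k<L. p (vs!k))" for vs
  define VC where "VC = VL \<times> C"
  define P where "P z = PV (fst z) * E (fst z) (snd z)" for z
  define S where "S l v y = (\<Sum>z\<in>VC. if fst z ! l = v \<and> snd z ! l = y then K l (fst z) * E (fst z) (snd z) else 0)" for l v y
  define q where "q l v y = (\<Sum>z\<in>VC. if fst z ! l = v \<and> snd z ! l = y then P z else 0)" for l v y
  define Sb where "Sb v y = (\<Sum>l<L. S l v y) / L" for v y
  define qb where "qb v y = (\<Sum>l<L. q l v y) / L" for v y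
  define rb where "rb y = (\<Sum>v\<in>UNIV. qb v y)" for y
  define Q where "Q v y = (if p v = 0 then 1 / real (card (UNIV :: 'y set)) else Sb v y)" for v y
  have PXnn: "\<And>x. PX x \<ge> 0" and PXsum: "(\<Sum>x\<in>UNIV. PX x) = 1" using PX by (auto simp: is_dist_def)
  have Wnn: "\<And>x v. W x v \<ge> 0" and Wsum: "\<And>x. (\<Sum>v\<in>UNIV. W x v) = 1"
    using W by (auto simp: is_channel_def is_dist_def)
  have pnn: "\<And>v. p v \<ge> 0" unfolding p_def using PXnn Wnn by (intro sum_nonneg) auto
  have psum: "(\<Sum>v\<in>UNIV. p v) = 1"
    unfolding p_def by (subst sum.swap) (simp add: sum_distrib_left[symmetric] Wsum PXsum)
  have PXW_le: "\<And>x v. PX x * W x v \<le> p v"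
    unfolding p_def using PXnn Wnn by (intro member_le_sum) auto
  have finXL: "finite XL" unfolding XL_def by (rule finite_len)
  have finVL: "finite VL" unfolding VL_def by (rule finite_len)
  have finC: "finite C" using C finite_len[of L] by (rule finite_subset)
  have finVC: "finite VC" unfolding VC_def using finVL finC by simp
  have E_le1: "\<And>vs ys. vs \<in> VL \<Longrightarrow> E vs ys \<le> 1"
  proof -
    fix vs ys assume "vs \<in> VL"
    then have s1: "(\<Sum>ys\<in>C. E vs ys) = 1" using E_sum by (simp add: VL_def)
    show "E vs ys \<le> 1"
    proof (cases "ys \<in> C")
      case True
      then show ?thesis using s1 member_le_sum[of ys C "E vs"] finC E_nonneg by auto
    next
      case False
      then show ?thesis using E_supp by simp
    qed
  qed
  have Knn: "\<And>l vs. K l vs \<ge> 0" unfolding K_def using pnn by (intro prod_nonneg) auto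
  have PVnn: "\<And>vs. PV vs \<ge> 0" unfolding PV_def using pnn by (intro prod_nonneg) auto
  have Pnn: "\<And>z. P z \<ge> 0" unfolding P_def using PVnn E_nonneg by simp
  have PV_split: "\<And>l vs. l < L \<Longrightarrow> PV vs = p (vs!l) * K l vs"
    unfolding PV_def K_def by (subst prod.remove[of _ l]) auto
  have q_eq: "\<And>l v y. l < L \<Longrightarrow> q l v y = p v * S l v y"
    unfolding q_def S_def sum_distrib_left
    by (intro sum.cong refl) (auto simp: P_def PV_split)
  have Ksum: "\<And>l v. l < L \<Longrightarrow> (\<Sum>vs\<in>VL. if vs ! l = v then K l vs else 0) = 1"
  proof -
    fix l v assume l: "l < L"
    define f where "f k b = (if k = l then 1 else p b)" for k b
    have "\<And>vs. (\<Prod>k<L. f k (vs!k)) = K l vs"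
      unfolding K_def using l by (subst prod.remove[of _ l]) (auto simp: f_def intro!: prod.cong)
    then have "(\<Sum>vs\<in>VL. if vs ! l = v then K l vs else 0)
       = (\<Sum>vs\<in>{vs. length vs = L}. (if vs!l = v then 1 else 0) * (\<Prod>k<L. f k (vs!k)))"
      unfolding VL_def by (intro sum.cong refl) auto
    also have "\<dots> = f l v * (\<Prod>k\<in>{..<L}-{l}. \<Sum>b\<in>UNIV. f k b)"
      by (rule sum_list_prod_fix[OF l])
    also have "\<dots> = 1" by (auto simp: f_def psum intro!: prod.neutral)
    finally show "(\<Sum>vs\<in>VL. if vs ! l = v then K l vs else 0) = 1" .
  qed
  have S_sum: "\<And>l v. l < L \<Longrightarrow> (\<Sum>y\<in>UNIV. S l v y) = 1"
  proof -
    fix l v assume l: "l < L"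
    have "(\<Sum>y\<in>UNIV. S l v y) = (\<Sum>z\<in>VC. \<Sum>y\<in>UNIV. if fst z ! l = v \<and> snd z ! l = y then K l (fst z) * E (fst z) (snd z) else 0)"
      unfolding S_def by (rule sum.swap)
    also have "\<dots> = (\<Sum>z\<in>VC. if fst z ! l = v then K l (fst z) * E (fst z) (snd z) else 0)"
      by (intro sum.cong refl) auto
    also have "\<dots> = (\<Sum>vs\<in>VL. \<Sum>ys\<in>C. if vs ! l = v then K l vs * E vs ys else 0)"
      unfolding VC_def by (simp add: sum.cartesian_product case_prod_beta)
    also have "\<dots> = (\<Sum>vs\<in>VL. if vs ! l = v then K l vs * (\<Sum>ys\<in>C. E vs ys) else 0)"
      by (intro sum.cong refl) (auto simp: sum_distrib_left)
    also have "\<dots> = (\<Sum>vs\<in>VL. if vs ! l = v then K l vs else 0)"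
      by (intro sum.cong refl) (auto simp: VL_def E_sum)
    also have "\<dots> = 1" using Ksum[OF l] .
    finally show "(\<Sum>y\<in>UNIV. S l v y) = 1" .
  qed
  have Snn: "\<And>l v y. S l v y \<ge> 0" unfolding S_def using Knn E_nonneg by (intro sum_nonneg) auto
  have Sbnn: "\<And>v y. Sb v y \<ge> 0" unfolding Sb_def using Snn by (intro divide_nonneg_nonneg sum_nonneg) auto
  have Sb_sum: "\<And>v. (\<Sum>y\<in>UNIV. Sb v y) = 1"
  proof -
    fix v
    have "(\<Sum>y\<in>UNIV. Sb v y) = (\<Sum>l<L. \<Sum>y\<in>UNIV. S l v y) / L"
      unfolding Sb_def by (simp add: sum_divide_distrib[symmetric] sum.swap[of _ UNIV])
    also have "\<dots> = (\<Sum>l<L. 1) / L" using S_sum by simp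
    finally show "(\<Sum>y\<in>UNIV. Sb v y) = 1" using L by simp
  qed
  have Qch: "is_channel Q"
  proof -
    have c: "card (UNIV :: 'y set) > 0" by (simp add: card_gt_0_iff)
    have "(\<Sum>y\<in>UNIV. Q v y) = 1" for v
      by (cases "p v = 0") (use c Sb_sum in \<open>auto simp: Q_def\<close>)
    moreover have "Q v y \<ge> 0" for v y using Sbnn by (simp add: Q_def)
    ultimately show ?thesis unfolding is_channel_def is_dist_def by auto
  qed
  have qb_eq: "\<And>v y. qb v y = p v * Sb v y"
    unfolding qb_def Sb_def by (simp add: q_eq sum_distrib_left)
  have margVY: "marg_VY PX W Q = (\<lambda>(v,y). qb v y)"
  proof (rule ext, clarify)
    fix v y
    have "marg_VY PX W Q (v,y) = p v * Q v y"
      by (simp add: marg_VY_def p_def sum_distrib_right)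
    also have "\<dots> = qb v y" by (simp add: Q_def qb_eq)
    finally show "marg_VY PX W Q (v,y) = qb v y" .
  qed
  have rowsum: "\<And>v. (\<Sum>y\<in>UNIV. qb v y) = p v"
    by (simp add: qb_eq sum_distrib_left[symmetric] Sb_sum)
  have qbnn: "\<And>v y. qb v y \<ge> 0" using qb_eq pnn Sbnn by simp
  have rbnn: "\<And>y. rb y \<ge> 0" unfolding rb_def using qbnn by (intro sum_nonneg) auto
  have PVsum: "(\<Sum>vs\<in>VL. PV vs) = 1"
    unfolding VL_def PV_def using sum_list_prod[of "\<lambda>l a. p a" L] by (simp add: psum)
  have Psum: "(\<Sum>z\<in>VC. P z) = 1"
  proof -
    have "(\<Sum>z\<in>VC. P z) = (\<Sum>vs\<in>VL. \<Sum>ys\<in>C. PV vs * E vs ys)"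
      unfolding VC_def P_def by (simp add: sum.cartesian_product case_prod_beta)
    also have "\<dots> = (\<Sum>vs\<in>VL. PV vs)"
      by (intro sum.cong refl) (auto simp: sum_distrib_left[symmetric] E_sum VL_def)
    finally show ?thesis using PVsum by simp
  qed
  have distortion_part: "d (marg_XY PX W Q) \<le> \<Delta>"
  proof -
    define T where "T = XL \<times> VC"
    define w where "w t = block_prob PX W E (fst t) (fst (snd t)) (snd (snd t))" for t :: "'x list \<times> 'v list \<times> 'y list"
    define em where "em t = emp_dist (fst t) (snd (snd t))" for t :: "'x list \<times> 'v list \<times> 'y list"
    have finT: "finite T" unfolding T_def using finXL finVC by simp
    have Tsum: "\<And>f. (\<Sum>t\<in>T. f t) = (\<Sum>z\<in>VC. \<Sum>xs\<in>XL. f (xs,z))"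
      unfolding T_def by (simp add: sum.cartesian_product') (rule sum.swap)
    have Delta: "\<Delta> = (\<Sum>t\<in>T. w t * d (em t))"
      unfolding distortion[symmetric] T_def VC_def w_def em_def XL_def VL_def
      by (simp add: sum.cartesian_product')
    have wxz: "\<And>xs z. xs \<in> XL \<Longrightarrow> w (xs,z) = (\<Prod>l<L. PX (xs!l) * W (xs!l) (fst z ! l)) * E (fst z) (snd z)"
      by (simp add: w_def block_prob_def XL_def)
    have xsum: "(\<Sum>xs\<in>XL. \<Prod>l<L. PX (xs!l) * W (xs!l) (vs!l)) = PV vs" for vs
      unfolding XL_def PV_def p_def using sum_list_prod[of "\<lambda>l a. PX a * W a (vs!l)" L] by simp
    have xsum_fix: "(\<Sum>xs\<in>XL. (if xs!l = x then 1 else 0) * (\<Prod>l<L. PX (xs!l) * W (xs!l) (vs!l))) = PX x * W x (vs!l) * K l vs"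
      if "l < L" for vs l x
      unfolding XL_def K_def p_def using sum_list_prod_fix[OF that, of x "\<lambda>l a. PX a * W a (vs!l)"] by simp
    have wnn: "\<And>t. w t \<ge> 0"
      unfolding w_def block_prob_def using PXnn Wnn E_nonneg by (intro mult_nonneg_nonneg prod_nonneg) auto
    have wsum: "(\<Sum>t\<in>T. w t) = 1"
    proof -
      have "(\<Sum>t\<in>T. w t) = (\<Sum>z\<in>VC. \<Sum>xs\<in>XL. (\<Prod>l<L. PX (xs!l) * W (xs!l) (fst z ! l)) * E (fst z) (snd z))"
        unfolding Tsum by (intro sum.cong refl) (simp add: wxz)
      also have "\<dots> = (\<Sum>z\<in>VC. P z)"
        by (simp add: sum_distrib_right[symmetric] xsum P_def)
      finally show ?thesis using Psum by simp
    qed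
    have card_sum: "\<And>Pr. real (card {l. l < L \<and> Pr l}) = (\<Sum>l<L. if Pr l then 1 else 0)"
    proof -
      fix Pr :: "nat \<Rightarrow> bool"
      have "(\<Sum>l<L. if Pr l then 1 else (0::real)) = (\<Sum>l\<in>{l\<in>{..<L}. Pr l}. 1)"
        using sum.inter_filter[of "{..<L}" "\<lambda>_. 1::real" Pr] by simp
      also have "{l\<in>{..<L}. Pr l} = {l. l < L \<and> Pr l}" by auto
      finally show "real (card {l. l < L \<and> Pr l}) = (\<Sum>l<L. if Pr l then 1 else 0)" by simp
    qed
    have emp_eq: "\<And>xs ys a b. length xs = L \<Longrightarrow> emp_dist xs ys (a,b) = (\<Sum>l<L. if xs!l = a \<and> ys!l = b then 1 else 0) / L"
      unfolding emp_dist_def using card_sum by simp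
    have emdist: "\<And>t. t \<in> T \<Longrightarrow> is_dist (em t)"
    proof -
      fix t assume t: "t \<in> T"
      then have lt: "length (fst t) = L" by (auto simp: T_def XL_def)
      have nn: "\<forall>ab. em t ab \<ge> 0" by (auto simp: em_def emp_dist_def)
      have "(\<Sum>ab\<in>UNIV. em t ab) = (\<Sum>ab\<in>UNIV. (\<Sum>l<L. if ab = (fst t ! l, snd (snd t) ! l) then 1 else 0) / L)"
        unfolding em_def using lt by (intro sum.cong refl) (auto simp: emp_eq split: prod.splits intro!: sum.cong)
      also have "\<dots> = (\<Sum>l<L. \<Sum>ab\<in>UNIV. if ab = (fst t ! l, snd (snd t) ! l) then 1 else 0) / L"
        by (simp only: sum_divide_distrib[symmetric] sum.swap[of _ UNIV "{..<L}"])
      also have "\<dots> = 1" using L by simp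
      finally show "is_dist (em t)" using nn by (simp add: is_dist_def)
    qed
    obtain g where g: "bij_betw g {0..<card T} T" using ex_bij_betw_nat_finite[OF finT] by blast
    have gT: "\<And>j. j \<in> {0..<card T} \<Longrightarrow> g j \<in> T" using g by (auto simp: bij_betw_def)
    have "d (\<lambda>pp. \<Sum>j\<in>{0..<card T}. w (g j) * em (g j) pp) \<le> (\<Sum>j\<in>{0..<card T}. w (g j) * d (em (g j)))"
      by (rule d_convex) (use gT wnn emdist sum.reindex_bij_betw[OF g, of w] wsum in auto)
    also have "\<dots> = \<Delta>" unfolding Delta using sum.reindex_bij_betw[OF g, of "\<lambda>t. w t * d (em t)"] by simp
    also have "(\<lambda>pp. \<Sum>j\<in>{0..<card T}. w (g j) * em (g j) pp) = (\<lambda>pp. \<Sum>t\<in>T. w t * em t pp)"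
    proof (rule ext)
      fix pp
      show "(\<Sum>j\<in>{0..<card T}. w (g j) * em (g j) pp) = (\<Sum>t\<in>T. w t * em t pp)"
        using sum.reindex_bij_betw[OF g, of "\<lambda>t. w t * em t pp"] by simp
    qed
    finally have dM: "d (\<lambda>pp. \<Sum>t\<in>T. w t * em t pp) \<le> \<Delta>" .
    have M: "(\<lambda>pp. \<Sum>t\<in>T. w t * em t pp) = marg_XY PX W Q"
    proof (rule ext, clarify)
      fix x y
      have inner: "\<And>l z. l < L \<Longrightarrow> (\<Sum>xs\<in>XL. (if xs!l = x \<and> snd z ! l = y then 1 else 0) * w (xs,z))
          = (if snd z ! l = y then PX x * W x (fst z ! l) * K l (fst z) * E (fst z) (snd z) else 0)"
      proof -
        fix l z assume l: "l < L"
        have "(\<Sum>xs\<in>XL. (if xs!l = x \<and> snd z ! l = y then 1 else 0) * w (xs,z))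
          = (if snd z ! l = y then 1 else 0) * E (fst z) (snd z) * (\<Sum>xs\<in>XL. (if xs!l = x then 1 else 0) * (\<Prod>l<L. PX (xs!l) * W (xs!l) (fst z ! l)))"
          unfolding sum_distrib_left by (intro sum.cong refl) (simp add: wxz)
        also have "\<dots> = (if snd z ! l = y then PX x * W x (fst z ! l) * K l (fst z) * E (fst z) (snd z) else 0)"
          using xsum_fix[OF l] by simp
        finally show "(\<Sum>xs\<in>XL. (if xs!l = x \<and> snd z ! l = y then 1 else 0) * w (xs,z))
          = (if snd z ! l = y then PX x * W x (fst z ! l) * K l (fst z) * E (fst z) (snd z) else 0)" .
      qed
      have mid: "\<And>l. (\<Sum>z\<in>VC. if snd z ! l = y then PX x * W x (fst z ! l) * K l (fst z) * E (fst z) (snd z) else 0)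
          = (\<Sum>v\<in>UNIV. PX x * W x v * S l v y)"
      proof -
        fix l
        have "(\<Sum>v\<in>UNIV. PX x * W x v * S l v y) = (\<Sum>v\<in>UNIV. \<Sum>z\<in>VC. if v = fst z ! l then (if snd z ! l = y then PX x * W x v * K l (fst z) * E (fst z) (snd z) else 0) else 0)"
          unfolding S_def sum_distrib_left by (intro sum.cong refl) auto
        also have "\<dots> = (\<Sum>z\<in>VC. \<Sum>v\<in>UNIV. if v = fst z ! l then (if snd z ! l = y then PX x * W x v * K l (fst z) * E (fst z) (snd z) else 0) else 0)"
          by (rule sum.swap)
        also have "\<dots> = (\<Sum>z\<in>VC. if snd z ! l = y then PX x * W x (fst z ! l) * K l (fst z) * E (fst z) (snd z) else 0)"
          by simp
        finally show "(\<Sum>z\<in>VC. if snd z ! l = y then PX x * W x (fst z ! l) * K l (fst z) * E (fst z) (snd z) else 0)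
          = (\<Sum>v\<in>UNIV. PX x * W x v * S l v y)" by simp
      qed
      have "(\<Sum>t\<in>T. w t * em t (x,y)) = (\<Sum>z\<in>VC. \<Sum>xs\<in>XL. w (xs,z) * ((\<Sum>l<L. if xs!l = x \<and> snd z ! l = y then 1 else 0) / L))"
        unfolding Tsum by (intro sum.cong refl) (simp add: em_def emp_eq XL_def)
      also have "\<dots> = (\<Sum>l<L. \<Sum>z\<in>VC. \<Sum>xs\<in>XL. (if xs!l = x \<and> snd z ! l = y then 1 else 0) * w (xs,z)) / L"
        by (simp add: sum_divide_distrib[symmetric] sum_distrib_left sum_distrib_right sum.swap[of _ "{..<L}"] mult.commute)
      also have "\<dots> = (\<Sum>l<L. \<Sum>v\<in>UNIV. PX x * W x v * S l v y) / L"
        using inner mid by simp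
      also have "\<dots> = (\<Sum>v\<in>UNIV. PX x * W x v * Sb v y)"
        unfolding Sb_def by (simp add: sum.swap[of _ "{..<L}"] sum_divide_distrib[symmetric] sum_distrib_left)
      also have "\<dots> = marg_XY PX W Q (x,y)"
        unfolding marg_XY_def
      proof (simp, intro sum.cong refl)
        fix v
        show "PX x * W x v * Sb v y = PX x * W x v * Q v y"
        proof (cases "p v = 0")
          case True
          then have "PX x * W x v = 0" using PXW_le[of x v] PXnn[of x] Wnn[of x v]
            by (metis antisym mult_nonneg_nonneg)
          then show ?thesis by simp
        qed (simp add: Q_def)
      qed
      finally show "(\<Sum>t\<in>T. w t * em t (x,y)) = marg_XY PX W Q (x,y)" .
    qed
    show ?thesis using dM M by simp
  qed
  have info_part: "mutual_info (marg_VY PX W Q) \<le> R"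
  proof -
    define h where "h v y = ln (qb v y / (p v * rb y))" for v y
    define G where "G z = (\<Prod>l<L. qb (fst z ! l) (snd z ! l) / rb (snd z ! l))" for z
    have colsum: "\<And>y. (\<Sum>v\<in>UNIV. qb v y) = rb y" by (simp add: rb_def)
    have MI: "mutual_info (marg_VY PX W Q) = (\<Sum>vy\<in>UNIV. qb (fst vy) (snd vy) * h (fst vy) (snd vy)) / ln 2"
    proof -
      have "mutual_info (marg_VY PX W Q) = (\<Sum>vy\<in>{vy. qb (fst vy) (snd vy) \<noteq> 0}. qb (fst vy) (snd vy) * h (fst vy) (snd vy) / ln 2)"
        unfolding mutual_info_def margVY
        by (intro sum.cong refl) (auto simp: rowsum colsum h_def log_def)
      also have "\<dots> = (\<Sum>vy\<in>UNIV. qb (fst vy) (snd vy) * h (fst vy) (snd vy) / ln 2)"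
        by (intro sum.mono_neutral_left) auto
      finally show ?thesis by (simp add: sum_divide_distrib)
    qed
    have qnn: "\<And>l v y. q l v y \<ge> 0" unfolding q_def using Pnn by (intro sum_nonneg) auto
    have step1: "real L * (\<Sum>vy\<in>UNIV. qb (fst vy) (snd vy) * h (fst vy) (snd vy))
        = (\<Sum>l<L. \<Sum>vy\<in>UNIV. q l (fst vy) (snd vy) * h (fst vy) (snd vy))"
    proof -
      have "real L * (\<Sum>vy\<in>UNIV. qb (fst vy) (snd vy) * h (fst vy) (snd vy))
          = (\<Sum>vy\<in>UNIV. (\<Sum>l<L. q l (fst vy) (snd vy)) * h (fst vy) (snd vy))"
        unfolding sum_distrib_left using L by (intro sum.cong refl) (simp add: qb_def)
      also have "\<dots> = (\<Sum>vy\<in>UNIV. \<Sum>l<L. q l (fst vy) (snd vy) * h (fst vy) (snd vy))"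
        by (simp add: sum_distrib_right)
      finally show ?thesis by (simp add: sum.swap[of _ UNIV])
    qed
    have step2: "\<And>l. (\<Sum>vy\<in>UNIV. q l (fst vy) (snd vy) * h (fst vy) (snd vy))
        = (\<Sum>z\<in>VC. P z * h (fst z ! l) (snd z ! l))"
    proof -
      fix l
      have "(\<Sum>vy\<in>UNIV. q l (fst vy) (snd vy) * h (fst vy) (snd vy))
          = (\<Sum>vy\<in>UNIV. \<Sum>z\<in>VC. if vy = (fst z ! l, snd z ! l) then P z * h (fst vy) (snd vy) else 0)"
        unfolding q_def sum_distrib_right by (intro sum.cong refl) auto
      also have "\<dots> = (\<Sum>z\<in>VC. \<Sum>vy\<in>UNIV. if vy = (fst z ! l, snd z ! l) then P z * h (fst vy) (snd vy) else 0)"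
        by (rule sum.swap)
      also have "\<dots> = (\<Sum>z\<in>VC. P z * h (fst z ! l) (snd z ! l))"
        by simp
      finally show "(\<Sum>vy\<in>UNIV. q l (fst vy) (snd vy) * h (fst vy) (snd vy))
        = (\<Sum>z\<in>VC. P z * h (fst z ! l) (snd z ! l))" .
    qed
    have step3: "real L * (\<Sum>vy\<in>UNIV. qb (fst vy) (snd vy) * h (fst vy) (snd vy))
        = (\<Sum>z\<in>VC. P z * (\<Sum>l<L. h (fst z ! l) (snd z ! l)))"
    proof -
      have "real L * (\<Sum>vy\<in>UNIV. qb (fst vy) (snd vy) * h (fst vy) (snd vy))
          = (\<Sum>l<L. \<Sum>z\<in>VC. P z * h (fst z ! l) (snd z ! l))"
        unfolding step1 using step2 by simp
      also have "\<dots> = (\<Sum>z\<in>VC. \<Sum>l<L. P z * h (fst z ! l) (snd z ! l))"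
        by (rule sum.swap)
      finally show ?thesis by (simp add: sum_distrib_left)
    qed
    define VCp where "VCp = {z\<in>VC. P z > 0}"
    have pos: "\<And>z l. z \<in> VC \<Longrightarrow> P z > 0 \<Longrightarrow> l < L \<Longrightarrow>
        qb (fst z ! l) (snd z ! l) > 0 \<and> rb (snd z ! l) > 0 \<and> p (fst z ! l) > 0"
    proof -
      fix z l assume z: "z \<in> VC" and Pz: "P z > 0" and l: "l < L"
      have "P z \<le> q l (fst z ! l) (snd z ! l)"
        unfolding q_def using member_le_sum[of z VC "\<lambda>z'. if fst z' ! l = fst z ! l \<and> snd z' ! l = snd z ! l then P z' else 0"] z finVC Pnn
        by auto
      then have q0: "q l (fst z ! l) (snd z ! l) > 0" using Pz by simp
      have "q l (fst z ! l) (snd z ! l) \<le> (\<Sum>l'<L. q l' (fst z ! l) (snd z ! l))"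
        using member_le_sum[of l "{..<L}" "\<lambda>l'. q l' (fst z ! l) (snd z ! l)"] l qnn by auto
      then have qb0: "qb (fst z ! l) (snd z ! l) > 0" unfolding qb_def using q0 L by simp
      have "qb (fst z ! l) (snd z ! l) \<le> rb (snd z ! l)"
        unfolding rb_def using member_le_sum[of "fst z ! l" UNIV "\<lambda>v. qb v (snd z ! l)"] qbnn by auto
      moreover have "qb (fst z ! l) (snd z ! l) \<le> p (fst z ! l)"
        unfolding rowsum[symmetric] using member_le_sum[of "snd z ! l" UNIV "\<lambda>y. qb (fst z ! l) y"] qbnn by auto
      ultimately show "qb (fst z ! l) (snd z ! l) > 0 \<and> rb (snd z ! l) > 0 \<and> p (fst z ! l) > 0"
        using qb0 by auto
    qed
    have Gpos: "\<And>z. z \<in> VCp \<Longrightarrow> G z > 0"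
      unfolding G_def VCp_def using pos by (auto intro!: prod_pos divide_pos_pos)
    have step4: "\<And>z. z \<in> VC \<Longrightarrow> P z * (\<Sum>l<L. h (fst z ! l) (snd z ! l))
        \<le> (if P z > 0 then P z * ln (G z / P z) else 0)"
    proof -
      fix z assume z: "z \<in> VC"
      show "P z * (\<Sum>l<L. h (fst z ! l) (snd z ! l)) \<le> (if P z > 0 then P z * ln (G z / P z) else 0)"
      proof (cases "P z > 0")
        case False
        then have "P z = 0" using Pnn[of z] by simp
        then show ?thesis by simp
      next
        case True
        have Gz: "G z > 0" using Gpos True z by (simp add: VCp_def)
        have PVz: "PV (fst z) > 0" unfolding PV_def using pos[OF z True] by (intro prod_pos) auto
        have Ez: "E (fst z) (snd z) > 0" using True PVz PVnn E_nonneg unfolding P_def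
          by (metis less_eq_real_def mult_zero_right)
        have Ele: "E (fst z) (snd z) \<le> 1" using E_le1 z by (auto simp: VC_def)
        have "(\<Sum>l<L. h (fst z ! l) (snd z ! l)) = ln (\<Prod>l<L. qb (fst z ! l) (snd z ! l) / (p (fst z ! l) * rb (snd z ! l)))"
          unfolding h_def using pos[OF z True] by (subst ln_prod) (auto, fastforce+)
        also have "(\<Prod>l<L. qb (fst z ! l) (snd z ! l) / (p (fst z ! l) * rb (snd z ! l))) = G z / PV (fst z)"
          unfolding G_def PV_def prod_dividef[symmetric] by (intro prod.cong refl) (simp add: field_simps)
        also have "ln (G z / PV (fst z)) \<le> ln (G z / P z)"
        proof -
          have "G z / PV (fst z) \<le> G z / P z"
            unfolding P_def using Gz PVz Ez Ele
            by (intro divide_left_mono) (auto intro: mult_left_le)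
          then show ?thesis using Gz PVz True by (subst ln_le_cancel_iff) auto
        qed
        finally show ?thesis using True by simp
      qed
    qed
    have PsumP: "(\<Sum>z\<in>VCp. P z) = 1"
    proof -
      have "(\<Sum>z\<in>VCp. P z) = (\<Sum>z\<in>VC. P z)"
        using finVC Pnn by (intro sum.mono_neutral_left) (auto simp: VCp_def less_eq_real_def)
      then show ?thesis using Psum by simp
    qed
    have Gnn: "\<And>z. G z \<ge> 0" unfolding G_def using qbnn rbnn by (intro prod_nonneg) auto
    have Gsum: "(\<Sum>z\<in>VC. G z) \<le> real (card C)"
    proof -
      have "(\<Sum>z\<in>VC. G z) = (\<Sum>ys\<in>C. \<Sum>vs\<in>VL. \<Prod>l<L. qb (vs ! l) (ys ! l) / rb (ys ! l))"
        unfolding VC_def G_def by (simp add: sum.cartesian_product') (rule sum.swap)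
      also have "\<dots> = (\<Sum>ys\<in>C. \<Prod>l<L. \<Sum>v\<in>UNIV. qb v (ys ! l) / rb (ys ! l))"
        unfolding VL_def by (subst sum_list_prod) simp
      also have "\<dots> \<le> (\<Sum>ys\<in>C. 1)"
      proof (intro sum_mono prod_le_1 ballI conjI)
        fix ys l
        show "0 \<le> (\<Sum>v\<in>UNIV. qb v (ys ! l) / rb (ys ! l))"
          using qbnn rbnn by (intro sum_nonneg divide_nonneg_nonneg) auto
        have "(\<Sum>v\<in>UNIV. qb v (ys ! l) / rb (ys ! l)) = rb (ys ! l) / rb (ys ! l)"
          by (simp add: sum_divide_distrib[symmetric] rb_def)
        then show "(\<Sum>v\<in>UNIV. qb v (ys ! l) / rb (ys ! l)) \<le> 1" by simp
      qed
      finally show ?thesis by simp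
    qed
    have C0: "card C > 0"
    proof -
      have "real (card C) > 0" using rate by simp
      then show ?thesis by simp
    qed
    have "real L * (\<Sum>vy\<in>UNIV. qb (fst vy) (snd vy) * h (fst vy) (snd vy))
        \<le> (\<Sum>z\<in>VC. if P z > 0 then P z * ln (G z / P z) else 0)"
      unfolding step3 using step4 by (intro sum_mono) auto
    also have "\<dots> = (\<Sum>z\<in>VCp. P z * ln (G z / P z))"
      unfolding VCp_def using finVC by (simp add: sum.inter_filter)
    also have "\<dots> \<le> ln (\<Sum>z\<in>VCp. G z)"
      using finVC Gpos PsumP by (intro gibbs) (auto simp: VCp_def)
    also have "\<dots> \<le> ln (real (card C))"
    proof -
      have ne: "VCp \<noteq> {}" using PsumP by auto
      have fin: "finite VCp" using finVC by (simp add: VCp_def)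
      have p1: "(\<Sum>z\<in>VCp. G z) > 0" using Gpos ne fin by (intro sum_pos) auto
      have "(\<Sum>z\<in>VCp. G z) \<le> (\<Sum>z\<in>VC. G z)"
        using finVC Gnn by (intro sum_mono2) (auto simp: VCp_def)
      then have "(\<Sum>z\<in>VCp. G z) \<le> real (card C)" using Gsum by simp
      then show ?thesis using p1 by (subst ln_le_cancel_iff) auto
    qed
    also have "\<dots> = real L * R * ln 2" using rate by simp
    finally have "real L * (\<Sum>vy\<in>UNIV. qb (fst vy) (snd vy) * h (fst vy) (snd vy)) \<le> real L * (R * ln 2)"
      by simp
    then have "(\<Sum>vy\<in>UNIV. qb (fst vy) (snd vy) * h (fst vy) (snd vy)) \<le> R * ln 2"
      using L by simp
    then show ?thesis unfolding MI by (simp add: divide_le_eq)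
  qed
  show ?thesis using Qch distortion_part info_part by blast
qed


end
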